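(* Let $\omega:[0,1]\to[0,1/2]$ satisfy $\omega\in C^0([0,1])\cap C^\infty((0,1))$, $\omega'(t)>0$ for all $t\in(0,1)$, $\omega(0)=0$, $\omega(1)=\tfrac12$. Let $\Delta\subset\mathbb{R}^2$ be the interior of the triangle with vertices $(-1,0)$, $(1,1)$, $(1,0)$, and for $a\in(0,1)$ let $l_a=\{(x_1,x_2)\in\mathbb{R}^2:\ x_2=\omega(a)(x_1+a),\ x_1\in(-a,1)\}$. Then there exists $u\in C^{0,1}(\overline{\Delta})\cap C^2(\Delta)$ such that $$|u(x)-u(y)|\le|x-y|\qquad\text{for all } x,y\in\Delta,$$ with equality if and only if $x,y\in l_a$ for some $a\in(0,1)$. *)

theory Defs
  imports "HOL-Analysis.Analysis"
begin

definition C_infinity_on :: "real set \<Rightarrow> (real \<Rightarrow> real) \<Rightarrow> bool" where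
  "C_infinity_on S f \<longleftrightarrow> (\<forall>k. ((deriv ^^ k) f) differentiable_on S)"

definition C2_on :: "(real \<times> real) set \<Rightarrow> (real \<times> real \<Rightarrow> real) \<Rightarrow> bool" where
  "C2_on S u \<longleftrightarrow>
     (\<exists>(Du :: real \<times> real \<Rightarrow> (real \<times> real) \<Rightarrow>\<^sub>L real)
        (D2u :: real \<times> real \<Rightarrow> (real \<times> real) \<Rightarrow>\<^sub>L ((real \<times> real) \<Rightarrow>\<^sub>L real)).
        (\<forall>x\<in>S. (u has_derivative blinfun_apply (Du x)) (at x)) \<and> continuous_on S Du \<and>
        (\<forall>x\<in>S. (Du has_derivative blinfun_apply (D2u x)) (at x)) \<and> continuous_on S D2u)"

definition Delta :: "(real \<times> real) set" where
  "Delta = interior (convex hull {(-1, 0), (1, 1), (1, 0)})"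

definition l_seg :: "(real \<Rightarrow> real) \<Rightarrow> real \<Rightarrow> (real \<times> real) set" where
  "l_seg \<omega> a = {(x1, x2). x2 = \<omega> a * (x1 + a) \<and> -a < x1 \<and> x1 < 1}"

end

theory Submission
  imports Defs
begin


lemma hull_tri: "convex hull {(-1, 0), (1, 1), (1, 0)} =
  {x::real\<times>real. (0,1) \<bullet> x \<ge> 0} \<inter> {x. (1,-2) \<bullet> x \<ge> -1} \<inter> {x. (-1,0) \<bullet> x \<ge> -1}"
  (is "?H = ?T")
proof
  show "?H \<subseteq> ?T" unfolding convex_hull_3 by (auto simp: inner_Pair)
  show "?T \<subseteq> ?H"
  proof
    fix x assume "x \<in> ?T"
    then obtain x1 x2 where x: "x = (x1,x2)" and h: "0 \<le> x2" "x2 \<le> (x1+1)/2" "x1 \<le> 1"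
      by (cases x) (auto simp: inner_Pair)
    have "(x1, x2) = ((1-x1)/2) *\<^sub>R (-1::real, 0::real) + x2 *\<^sub>R (1, 1) + ((1+x1)/2 - x2) *\<^sub>R (1, 0)"
      by (auto simp: field_simps)
    moreover have "0 \<le> (1-x1)/2" "0 \<le> (1+x1)/2 - x2" "(1-x1)/2 + x2 + ((1+x1)/2 - x2) = 1"
      using h by (auto simp: field_simps)
    ultimately show "x \<in> ?H" unfolding convex_hull_3 x using h(1) by blast
  qed
qed

lemma Delta_eq: "Delta = {x. 0 < snd x \<and> snd x < (fst x + 1)/2 \<and> fst x < 1}"
proof -
  have ne: "(0::real,1::real) \<noteq> 0" "(1::real,-2::real) \<noteq> 0" "(-1::real,0::real) \<noteq> 0"
    by (auto simp: zero_prod_def)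
  have "Delta = {x::real\<times>real. (0,1) \<bullet> x > 0} \<inter> {x. (1,-2) \<bullet> x > -1} \<inter> {x. (-1,0) \<bullet> x > -1}"
    unfolding Delta_def hull_tri interior_Int interior_halfspace_ge[OF ne(1)]
      interior_halfspace_ge[OF ne(2)] interior_halfspace_ge[OF ne(3)] ..
  also have "\<dots> = {x. 0 < snd x \<and> snd x < (fst x + 1)/2 \<and> fst x < 1}"
    by (auto simp: inner_prod_def)
  finally show ?thesis .
qed

lemma chainD: "(\<phi> has_real_derivative D) (at (h x)) \<Longrightarrow> (h has_derivative h') (at x)
   \<Longrightarrow> ((\<lambda>y. \<phi> (h y)) has_derivative (\<lambda>v. D * h' v)) (at x)"
  using has_derivative_compose[of h h' x UNIV \<phi> "(*) D"] by (simp add: has_field_derivative_def)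

lemma alg: fixes R W W' c F da h1 h2 :: real
  assumes "R > 0" "R^2 = 1 + W^2" "F = W' * c + W" "da * F = h2 - W*h1"
  shows "c * (W*W'/R * da) + (h1 + da) * R - 1/R * da = (h1 + W*h2)/R"
proof -
  have "c*(W*W'/R*da) + (h1+da)*R - 1/R*da = (c*W*W'*da + (h1+da)*R^2 - da)/R"
    using assms(1) by (simp add: field_simps power2_eq_square)
  also have "c*W*W'*da + (h1+da)*R^2 - da = h1 + h1*W^2 + W*(da*F)"
    unfolding assms(2,3) by (simp add: algebra_simps power2_eq_square)
  also have "\<dots> = h1 + W*h2"
    unfolding assms(4) by (simp add: algebra_simps power2_eq_square)
  finally show ?thesis .
qed

locale om =
  fixes \<omega> :: "real \<Rightarrow> real"
  assumes range: "\<omega> ` {0..1} \<subseteq> {0..1/2}" and cont: "continuous_on {0..1} \<omega>"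
    and cinf: "C_infinity_on {0<..<1} \<omega>" and dpos: "\<forall>t\<in>{0<..<1}. deriv \<omega> t > 0"
    and w0: "\<omega> 0 = 0" and w1: "\<omega> 1 = 1/2"
begin

lemma deriv_w: "0 < t \<Longrightarrow> t < 1 \<Longrightarrow> (\<omega> has_real_derivative deriv \<omega> t) (at t)"
proof -
  assume t: "0 < t" "t < 1"
  have "((deriv ^^ 0) \<omega>) differentiable_on {0<..<1}" using cinf unfolding C_infinity_on_def by blast
  then have "\<omega> differentiable at t" using t
    by (simp add: differentiable_on_eq_differentiable_at)
  then show ?thesis by (simp add: DERIV_deriv_iff_real_differentiable)
qed

lemma deriv_w2: "0 < t \<Longrightarrow> t < 1 \<Longrightarrow> deriv \<omega> differentiable at t"
proof -
  assume t: "0 < t" "t < 1"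
  have "((deriv ^^ 1) \<omega>) differentiable_on {0<..<1}" using cinf unfolding C_infinity_on_def by blast
  then show "deriv \<omega> differentiable at t" using t
    by (simp add: differentiable_on_eq_differentiable_at)
qed

lemma cont_dw: "continuous_on {0<..<1} (deriv \<omega>)"
  by (meson continuous_at_imp_continuous_on deriv_w2 differentiable_imp_continuous_within greaterThanLessThan_iff)

lemma cont_w: "continuous_on {0<..<1} \<omega>"
  using cont by (rule continuous_on_subset) auto

lemma mono_w: "0 \<le> s \<Longrightarrow> s < t \<Longrightarrow> t \<le> 1 \<Longrightarrow> \<omega> s < \<omega> t"
proof -
  assume st: "0 \<le> s" "s < t" "t \<le> 1"
  have "continuous_on {s..t} \<omega>" using cont by (rule continuous_on_subset) (use st in auto)
  moreover have "\<omega> differentiable (at x)" if "s < x" "x < t" for x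
    using deriv_w[of x] that st real_differentiable_def by fastforce
  ultimately obtain l z where z: "s < z" "z < t" "DERIV \<omega> z :> l" "\<omega> t - \<omega> s = (t - s) * l"
    using MVT[OF st(2)] by blast
  have "l = deriv \<omega> z" using z st deriv_w[of z] DERIV_unique by fastforce
  then have "l > 0" using dpos z st by auto
  then have "(t-s)*l > 0" using z by simp
  then show ?thesis using z(4) by linarith
qed

lemma pos_w: "0 < t \<Longrightarrow> t \<le> 1 \<Longrightarrow> \<omega> t > 0"
  using mono_w[of 0 t] w0 by auto

lemma le_w: "0 \<le> t \<Longrightarrow> t \<le> 1 \<Longrightarrow> \<omega> t \<le> 1/2"
proof -
  assume "0 \<le> t" "t \<le> 1"
  then have "\<omega> t \<in> \<omega> ` {0..1}" by auto
  then show ?thesis using range by auto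
qed

lemma uniq: "0<b \<Longrightarrow> b<1 \<Longrightarrow> 0<s+b \<Longrightarrow> 0<b' \<Longrightarrow> b'<1 \<Longrightarrow> 0 < s+b'
   \<Longrightarrow> \<omega> b * (s+b) = \<omega> b' * (s+b') \<Longrightarrow> b = b'"
proof -
  have *: "\<omega> b * (s+b) < \<omega> b' * (s+b')" if "0<b" "b<b'" "b'<1" "0<s+b" for b b'
    by (rule mult_strict_mono) (use that mono_w[of b b'] pos_w[of b] in auto)
  show "0<b \<Longrightarrow> b<1 \<Longrightarrow> 0<s+b \<Longrightarrow> 0<b' \<Longrightarrow> b'<1 \<Longrightarrow> 0 < s+b'
   \<Longrightarrow> \<omega> b * (s+b) = \<omega> b' * (s+b') \<Longrightarrow> b = b'"
    using *[of b b'] *[of b' b] by (cases "b < b'"; cases "b' < b") auto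
qed

lemma exist: "x \<in> Delta \<Longrightarrow> \<exists>b. 0<b \<and> b<1 \<and> 0 < fst x + b \<and> snd x = \<omega> b * (fst x + b)"
proof -
  assume "x \<in> Delta"
  then obtain x1 x2 where x: "x = (x1, x2)" "0 < x2" "x2 < (x1+1)/2" "x1 < 1"
    unfolding Delta_eq by (cases x) auto
  define b0 where "b0 = max 0 (-x1)"
  define g where "g b = \<omega> b * (x1 + b) - x2" for b
  have b0: "0 \<le> b0" "b0 < 1" using x unfolding b0_def by auto
  have "g b0 < 0" unfolding g_def b0_def using w0 x by (auto simp: max_def)
  moreover have "g 1 > 0" unfolding g_def w1 using x by auto
  moreover have "continuous_on {b0..1} g" unfolding g_def
    by (intro continuous_intros continuous_on_subset[OF cont]) (use b0 in auto)
  ultimately obtain b where b: "b0 \<le> b" "b \<le> 1" "g b = 0"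
    using IVT'[of g b0 0 1] b0 by auto
  have "b \<noteq> b0" "b \<noteq> 1" using b \<open>g b0 < 0\<close> \<open>g 1 > 0\<close> by auto
  then show ?thesis using b x b0 unfolding g_def b0_def
    by (intro exI[of _ b]) auto
qed

definition aa :: "real\<times>real \<Rightarrow> real" where
  "aa x = (THE b. 0<b \<and> b<1 \<and> 0 < fst x + b \<and> snd x = \<omega> b * (fst x + b))"

lemma aa: "x \<in> Delta \<Longrightarrow> 0 < aa x \<and> aa x < 1 \<and> 0 < fst x + aa x \<and> snd x = \<omega> (aa x) * (fst x + aa x)"
  unfolding aa_def
  apply (rule theI')
  using exist uniq by metis

lemma aa_eq: "0<b \<Longrightarrow> b<1 \<Longrightarrow> 0<s+b \<Longrightarrow> aa (s, \<omega> b * (s+b)) = b"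
  unfolding aa_def
  apply (rule the_equality)
  using uniq by auto


definition SS :: "(real\<times>real) set" where "SS = {p. 0 < fst p \<and> fst p < 1 \<and> 0 < snd p + fst p}"
definition ff :: "real\<times>real \<Rightarrow> real\<times>real" where "ff p = (snd p, \<omega> (fst p) * (snd p + fst p))"
definition Fa :: "real\<times>real \<Rightarrow> real" where "Fa x = deriv \<omega> (aa x) * (fst x + aa x) + \<omega> (aa x)"
definition da :: "real\<times>real \<Rightarrow> real\<times>real \<Rightarrow> real" where "da x h = (snd h - \<omega> (aa x) * fst h) / Fa x"

lemma Fa_pos: "x \<in> Delta \<Longrightarrow> Fa x > 0"
proof -
  assume x: "x \<in> Delta"
  have "deriv \<omega> (aa x) * (fst x + aa x) > 0" using aa[OF x] dpos by (intro mult_pos_pos) auto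
  moreover have "\<omega> (aa x) > 0" using aa[OF x] pos_w[of "aa x"] by auto
  ultimately show ?thesis unfolding Fa_def by simp
qed

lemma open_SS: "open SS"
  unfolding SS_def by (intro open_Collect_conj open_Collect_less continuous_intros)

lemma cont_ff: "continuous_on SS ff"
proof -
  have "continuous_on SS (\<lambda>p. \<omega> (fst p))"
    by (rule continuous_on_compose2[OF cont_w continuous_on_fst]) (auto simp: SS_def)
  then show ?thesis unfolding ff_def by (intro continuous_intros) auto
qed

lemma aa_deriv: "x \<in> Delta \<Longrightarrow> (aa has_derivative da x) (at x)"
proof -
  assume x: "x \<in> Delta"
  note ax = aa[OF x]
  define p where "p = (aa x, fst x)"
  have pS: "p \<in> SS" using ax unfolding p_def SS_def by auto
  have fp: "ff p = x" unfolding p_def ff_def using ax by (cases x) (auto simp: algebra_simps)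
  have gf: "(\<lambda>y. (aa y, fst y)) (ff q) = q" if "q \<in> SS" for q
    using that aa_eq[of "fst q" "snd q"] unfolding SS_def ff_def by (cases q) (auto simp: add.commute)
  have d_om: "((\<lambda>q. \<omega> (fst q)) has_derivative (\<lambda>h. deriv \<omega> (aa x) * fst h)) (at p)"
    using chainD[of \<omega> "deriv \<omega> (aa x)" fst p fst] deriv_w[of "aa x"] ax
      has_derivative_fst[OF has_derivative_ident] unfolding p_def by auto
  have derf: "(ff has_derivative (\<lambda>h. (snd h, \<omega> (aa x) * (snd h + fst h) + deriv \<omega> (aa x) * fst h * (fst x + aa x)))) (at p)"
    unfolding ff_def
    apply (rule has_derivative_Pair)
     apply (rule has_derivative_snd[OF has_derivative_ident])
    apply (rule has_derivative_eq_rhs)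
     apply (rule has_derivative_mult[OF d_om has_derivative_add[OF has_derivative_snd[OF has_derivative_ident] has_derivative_fst[OF has_derivative_ident]]])
    apply (auto simp: p_def algebra_simps)
    done
  have Fne: "Fa x \<noteq> 0" using Fa_pos[OF x] by simp
  have id: "(\<lambda>h. (snd h, \<omega> (aa x) * (snd h + fst h) + deriv \<omega> (aa x) * fst h * (fst x + aa x)))
      \<circ> (\<lambda>h. (da x h, fst h)) = id"
  proof
    fix h :: "real\<times>real"
    have e: "da x h * Fa x = snd h - \<omega> (aa x) * fst h" using Fne by (simp add: da_def)
    have "\<omega> (aa x) * (fst h + da x h) + deriv \<omega> (aa x) * da x h * (fst x + aa x)
        = \<omega> (aa x) * fst h + da x h * Fa x" by (simp add: Fa_def algebra_simps)
    then have "\<omega> (aa x) * (fst h + da x h) + deriv \<omega> (aa x) * da x h * (fst x + aa x) = snd h"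
      using e by linarith
    then show "((\<lambda>h. (snd h, \<omega> (aa x) * (snd h + fst h) + deriv \<omega> (aa x) * fst h * (fst x + aa x)))
      \<circ> (\<lambda>h. (da x h, fst h))) h = id h" by (cases h) auto
  qed
  have "((\<lambda>y. (aa y, fst y)) has_derivative (\<lambda>h. (da x h, fst h))) (at (ff p))"
    by (rule has_derivative_inverse_strong[OF open_SS pS cont_ff gf derf id])
  then have "((\<lambda>y. fst (aa y, fst y)) has_derivative (\<lambda>h. fst (da x h, fst h))) (at x)"
    unfolding fp by (rule has_derivative_fst)
  then show ?thesis by simp
qed

lemma cont_aa: "continuous_on Delta aa"
  by (meson aa_deriv continuous_at_imp_continuous_on has_derivative_continuous)


definition Rf :: "real \<Rightarrow> real" where "Rf b = sqrt (1 + (\<omega> b)^2)"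
definition EE :: "real \<Rightarrow> real" where "EE b = integral {0..b} (\<lambda>t. 1 / Rf t)"
definition u0 :: "real\<times>real \<Rightarrow> real" where "u0 x = (fst x + aa x) * Rf (aa x) - EE (aa x)"

lemma Rf_pos: "Rf b > 0"
  unfolding Rf_def by (intro real_sqrt_gt_zero add_pos_nonneg) auto

lemma Rf_sq: "(Rf b)^2 = 1 + (\<omega> b)^2"
  unfolding Rf_def by (rule real_sqrt_pow2) simp

lemma dR: "0 < b \<Longrightarrow> b < 1 \<Longrightarrow> (Rf has_real_derivative \<omega> b * deriv \<omega> b / Rf b) (at b)"
proof -
  assume b: "0 < b" "b < 1"
  have i: "((\<lambda>b. 1 + (\<omega> b)^2) has_real_derivative 2 * \<omega> b * deriv \<omega> b) (at b)"
  proof -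
    have p: "((\<lambda>x. (\<omega> x)^2) has_real_derivative 2 * \<omega> b * deriv \<omega> b) (at b)"
      using DERIV_power[OF deriv_w[OF b], of 2] by (simp add: ac_simps)
    have "((\<lambda>b. 1 + (\<omega> b)^2) has_real_derivative 0 + 2 * \<omega> b * deriv \<omega> b) (at b)"
      by (intro DERIV_add DERIV_const p)
    then show ?thesis by simp
  qed
  have p: "0 < 1 + (\<omega> b)^2" by (simp add: add_pos_nonneg)
  have "((\<lambda>b. sqrt (1 + (\<omega> b)^2)) has_real_derivative
      inverse (sqrt (1 + (\<omega> b)^2)) / 2 * (2 * \<omega> b * deriv \<omega> b)) (at b)"
    by (rule DERIV_chain2[OF DERIV_real_sqrt[OF p] i])
  then show ?thesis unfolding Rf_def[abs_def] by (simp add: inverse_eq_divide)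
qed

lemma sq_ne: "1 + (y::real)^2 \<noteq> 0" "sqrt (1 + y^2) \<noteq> 0"
  by (smt (verit) zero_le_power2 real_sqrt_eq_zero_cancel_iff)+

lemma cont_invR: "continuous_on {0..1} (\<lambda>t. 1 / Rf t)"
proof -
  have c1: "continuous_on {0..1} (\<lambda>t. 1 + (\<omega> t)^2)"
    by (intro continuous_on_add continuous_on_const continuous_on_power cont)
  have c2: "continuous_on {0..1} (\<lambda>t. sqrt (1 + (\<omega> t)^2))"
    by (rule continuous_on_real_sqrt[OF c1])
  show ?thesis unfolding Rf_def
    by (rule continuous_on_divide[OF continuous_on_const c2]) (simp add: sq_ne)
qed
lemma dE: "0 < b \<Longrightarrow> b < 1 \<Longrightarrow> (EE has_real_derivative 1 / Rf b) (at b)"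
proof -
  assume b: "0 < b" "b < 1"
  have "(EE has_real_derivative 1 / Rf b) (at b within {0..1})"
    unfolding EE_def[abs_def] by (rule integral_has_real_derivative[OF cont_invR]) (use b in auto)
  moreover have "at b within {0..1} = at b" by (rule at_within_interior) (use b in auto)
  ultimately show ?thesis by simp
qed

lemma u0_deriv: "x \<in> Delta \<Longrightarrow> (u0 has_derivative (\<lambda>h. (fst h + \<omega> (aa x) * snd h) / Rf (aa x))) (at x)"
proof -
  assume x: "x \<in> Delta"
  note ax = aa[OF x]
  have d1: "((\<lambda>y. fst y + aa y) has_derivative (\<lambda>h. fst h + da x h)) (at x)"
    by (rule has_derivative_add[OF has_derivative_fst[OF has_derivative_ident] aa_deriv[OF x]])
  have d2: "((\<lambda>y. Rf (aa y)) has_derivative (\<lambda>h. (\<omega> (aa x) * deriv \<omega> (aa x) / Rf (aa x)) * da x h)) (at x)"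
    by (rule chainD[OF dR aa_deriv[OF x]]) (use ax in auto)
  have d3: "((\<lambda>y. EE (aa y)) has_derivative (\<lambda>h. (1 / Rf (aa x)) * da x h)) (at x)"
    by (rule chainD[OF dE aa_deriv[OF x]]) (use ax in auto)
  have "(u0 has_derivative (\<lambda>h. (fst x + aa x) * ((\<omega> (aa x) * deriv \<omega> (aa x) / Rf (aa x)) * da x h)
      + (fst h + da x h) * Rf (aa x) - (1 / Rf (aa x)) * da x h)) (at x)"
    unfolding u0_def[abs_def] by (rule has_derivative_diff[OF has_derivative_mult[OF d1 d2] d3])
  moreover have "(\<lambda>h. (fst x + aa x) * ((\<omega> (aa x) * deriv \<omega> (aa x) / Rf (aa x)) * da x h)
      + (fst h + da x h) * Rf (aa x) - (1 / Rf (aa x)) * da x h) = (\<lambda>h. (fst h + \<omega> (aa x) * snd h) / Rf (aa x))"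
  proof
    fix h
    have Fne: "Fa x \<noteq> 0" using Fa_pos[OF x] by simp
    have e: "da x h * Fa x = snd h - \<omega> (aa x) * fst h" using Fne by (simp add: da_def)
    show "(fst x + aa x) * ((\<omega> (aa x) * deriv \<omega> (aa x) / Rf (aa x)) * da x h)
      + (fst h + da x h) * Rf (aa x) - (1 / Rf (aa x)) * da x h = (fst h + \<omega> (aa x) * snd h) / Rf (aa x)"
      by (rule alg[OF Rf_pos Rf_sq Fa_def e])
  qed
  ultimately show ?thesis by simp
qed

end



lemmas bl_simps = plus_blinfun.rep_eq scaleR_blinfun.rep_eq minus_blinfun.rep_eq

definition B1 :: "(real\<times>real) \<Rightarrow>\<^sub>L real" where "B1 = Blinfun fst"
definition B2 :: "(real\<times>real) \<Rightarrow>\<^sub>L real" where "B2 = Blinfun snd"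
lemma B1_ap[simp]: "blinfun_apply B1 h = fst h"
  unfolding B1_def bounded_linear_Blinfun_apply[OF bounded_linear_fst] by (rule refl)
lemma B2_ap[simp]: "blinfun_apply B2 h = snd h"
  unfolding B2_def bounded_linear_Blinfun_apply[OF bounded_linear_snd] by (rule refl)

definition K :: "(real\<times>real) \<Rightarrow>\<^sub>L real \<Rightarrow> (real\<times>real) \<Rightarrow>\<^sub>L real \<Rightarrow> (real\<times>real) \<Rightarrow>\<^sub>L ((real\<times>real) \<Rightarrow>\<^sub>L real)"
  where "K A B = blinfun_scaleR_left A o\<^sub>L B"
lemma K_ap[simp]: "blinfun_apply (K A B) h = blinfun_apply B h *\<^sub>R A"
  unfolding K_def by simp

context om begin

definition q1 :: "real \<Rightarrow> real" where "q1 b = 1 / Rf b"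
definition q2 :: "real \<Rightarrow> real" where "q2 b = \<omega> b / Rf b"
definition q1' :: "real \<Rightarrow> real" where "q1' b = (0 * Rf b - 1 * (\<omega> b * deriv \<omega> b / Rf b)) / (Rf b * Rf b)"
definition q2' :: "real \<Rightarrow> real" where "q2' b = (deriv \<omega> b * Rf b - \<omega> b * (\<omega> b * deriv \<omega> b / Rf b)) / (Rf b * Rf b)"

lemma dq1: "0 < b \<Longrightarrow> b < 1 \<Longrightarrow> (q1 has_real_derivative q1' b) (at b)"
  unfolding q1_def[abs_def] q1'_def
  by (rule DERIV_divide[OF DERIV_const dR]) (use Rf_pos[of b] in auto)

lemma dq2: "0 < b \<Longrightarrow> b < 1 \<Longrightarrow> (q2 has_real_derivative q2' b) (at b)"
  unfolding q2_def[abs_def] q2'_def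
  by (rule DERIV_divide[OF deriv_w dR]) (use Rf_pos[of b] in auto)

definition Du :: "real\<times>real \<Rightarrow> (real\<times>real) \<Rightarrow>\<^sub>L real" where
  "Du x = q1 (aa x) *\<^sub>R B1 + q2 (aa x) *\<^sub>R B2"

definition D2u :: "real\<times>real \<Rightarrow> (real\<times>real) \<Rightarrow>\<^sub>L ((real\<times>real) \<Rightarrow>\<^sub>L real)" where
  "D2u x = (q1' (aa x) / Fa x) *\<^sub>R K B1 B2 - (q1' (aa x) * \<omega> (aa x) / Fa x) *\<^sub>R K B1 B1
         + (q2' (aa x) / Fa x) *\<^sub>R K B2 B2 - (q2' (aa x) * \<omega> (aa x) / Fa x) *\<^sub>R K B2 B1"

lemma Du_ap: "blinfun_apply (Du x) h = (fst h + \<omega> (aa x) * snd h) / Rf (aa x)"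
  unfolding Du_def q1_def q2_def by (simp add: bl_simps add_divide_distrib)

lemma u0_Du: "x \<in> Delta \<Longrightarrow> (u0 has_derivative blinfun_apply (Du x)) (at x)"
  using u0_deriv[of x] by (simp add: Du_ap[abs_def])

lemma Du_D2u: "x \<in> Delta \<Longrightarrow> (Du has_derivative blinfun_apply (D2u x)) (at x)"
proof -
  assume x: "x \<in> Delta"
  note ax = aa[OF x]
  have e1: "((\<lambda>y. q1 (aa y)) has_derivative (\<lambda>h. q1' (aa x) * da x h)) (at x)"
    by (rule chainD[OF dq1 aa_deriv[OF x]]) (use ax in auto)
  have e2: "((\<lambda>y. q2 (aa y)) has_derivative (\<lambda>h. q2' (aa x) * da x h)) (at x)"
    by (rule chainD[OF dq2 aa_deriv[OF x]]) (use ax in auto)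
  have "(Du has_derivative (\<lambda>h. (q1 (aa x) *\<^sub>R 0 + (q1' (aa x) * da x h) *\<^sub>R B1)
          + (q2 (aa x) *\<^sub>R 0 + (q2' (aa x) * da x h) *\<^sub>R B2))) (at x)"
    unfolding Du_def[abs_def]
    by (rule has_derivative_add[OF has_derivative_scaleR[OF e1 has_derivative_const]
          has_derivative_scaleR[OF e2 has_derivative_const]])
  moreover have "(\<lambda>h. (q1 (aa x) *\<^sub>R 0 + (q1' (aa x) * da x h) *\<^sub>R B1)
          + (q2 (aa x) *\<^sub>R 0 + (q2' (aa x) * da x h) *\<^sub>R B2)) = blinfun_apply (D2u x)"
  proof
    fix h
    have Fne: "Fa x \<noteq> 0" using Fa_pos[OF x] by simp
    show "(q1 (aa x) *\<^sub>R 0 + (q1' (aa x) * da x h) *\<^sub>R B1)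
          + (q2 (aa x) *\<^sub>R 0 + (q2' (aa x) * da x h) *\<^sub>R B2) = blinfun_apply (D2u x) h"
      by (rule blinfun_eqI) (use Fne in \<open>simp add: bl_simps D2u_def da_def field_simps\<close>)
  qed
  ultimately show ?thesis by simp
qed

lemma cont_coef:
  assumes "continuous_on {0<..<1} g"
  shows "continuous_on Delta (\<lambda>x. g (aa x))"
  by (rule continuous_on_compose2[OF assms cont_aa]) (use aa in auto)

lemma cont_Rf: "continuous_on {0<..<1} Rf"
  unfolding Rf_def[abs_def]
  by (intro continuous_on_real_sqrt continuous_on_add continuous_on_const continuous_on_power cont_w)

lemma Rf_ne: "Rf b \<noteq> 0" using Rf_pos[of b] by simp

lemma cont_Du: "continuous_on Delta Du"
proof -
  have "continuous_on {0<..<1} q1" "continuous_on {0<..<1} q2"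
    unfolding q1_def[abs_def] q2_def[abs_def]
    by (intro continuous_on_divide continuous_on_const cont_Rf cont_w; simp add: Rf_ne)+
  then show ?thesis unfolding Du_def[abs_def]
    by (intro continuous_on_add continuous_on_scaleR continuous_on_const cont_coef)
qed

lemma cont_D2u: "continuous_on Delta D2u"
proof -
  have c1: "continuous_on {0<..<1} q1'" "continuous_on {0<..<1} q2'"
    unfolding q1'_def[abs_def] q2'_def[abs_def]
    by (intro continuous_on_divide continuous_on_const continuous_on_mult continuous_on_diff
        cont_Rf cont_w cont_dw; simp add: Rf_ne)+
  have cF: "continuous_on Delta Fa"
    unfolding Fa_def[abs_def]
    by (intro continuous_on_add continuous_on_mult cont_coef cont_w cont_dw continuous_on_fst
        continuous_on_id cont_aa)
  have cW: "continuous_on Delta (\<lambda>x. \<omega> (aa x))" by (rule cont_coef[OF cont_w])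
  have Fne: "\<forall>x\<in>Delta. Fa x \<noteq> 0" using Fa_pos by force
  show ?thesis unfolding D2u_def[abs_def]
    by (intro continuous_on_add continuous_on_diff continuous_on_scaleR continuous_on_const
        continuous_on_divide continuous_on_mult cont_coef c1 cF cW Fne)
qed

lemma C2_u0: "C2_on Delta u0"
  unfolding C2_on_def using u0_Du Du_D2u cont_Du cont_D2u by blast

end



lemma cs_ineq: fixes R W d1 d2 :: real
  assumes R: "R > 0" "R^2 = 1 + W^2"
  shows "\<bar>(d1 + W*d2)/R\<bar> \<le> sqrt (d1^2 + d2^2)"
    and "\<bar>(d1 + W*d2)/R\<bar> = sqrt (d1^2 + d2^2) \<Longrightarrow> d2 = W*d1"
proof -
  have key: "R^2*(d1^2+d2^2) = (d1+W*d2)^2 + (W*d1 - d2)^2"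
    unfolding R(2) by (simp add: algebra_simps power2_eq_square)
  have e: "\<bar>(d1 + W*d2)/R\<bar> = sqrt ((d1 + W*d2)^2 / R^2)"
    using R(1) by (simp add: real_sqrt_divide)
  have "(d1 + W*d2)^2 / R^2 \<le> d1^2 + d2^2"
    using key R(1) by (simp add: divide_le_eq mult.commute)
  then show "\<bar>(d1 + W*d2)/R\<bar> \<le> sqrt (d1^2 + d2^2)" unfolding e by simp
  assume "\<bar>(d1 + W*d2)/R\<bar> = sqrt (d1^2 + d2^2)"
  then have "(d1 + W*d2)^2 / R^2 = d1^2 + d2^2" unfolding e
    by (simp add: add_nonneg_nonneg)
  then have "(d1 + W*d2)^2 = R^2 * (d1^2 + d2^2)" using R(1) by (simp add: divide_eq_eq mult.commute)
  then have "(W*d1 - d2)^2 = 0" using key by simp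
  then show "d2 = W*d1" by simp
qed


lemma dist_pair: "dist (x::real\<times>real) y = sqrt ((fst y - fst x)^2 + (snd y - snd x)^2)"
  by (cases x; cases y) (simp add: dist_prod_def dist_real_def power2_commute)

lemma conv_Delta: "convex Delta"
  unfolding Delta_def by (simp add: convex_interior convex_convex_hull)

context om begin

lemma l_seg_iff: "x \<in> l_seg \<omega> a \<longleftrightarrow> snd x = \<omega> a * (fst x + a) \<and> -a < fst x \<and> fst x < 1"
  by (cases x) (simp add: l_seg_def)

lemma lip:
  assumes x: "x \<in> Delta" and y: "y \<in> Delta"
  shows "\<bar>u0 x - u0 y\<bar> \<le> dist x y \<and>
     (\<bar>u0 x - u0 y\<bar> = dist x y \<longrightarrow> (\<exists>a\<in>{0<..<1}. x \<in> l_seg \<omega> a \<and> y \<in> l_seg \<omega> a))"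
proof -
  define d where "d = y - x"
  define \<phi> where "\<phi> t = u0 (x + t *\<^sub>R d)" for t
  have seg: "x + t *\<^sub>R d \<in> Delta" if "0 \<le> t" "t \<le> 1" for t
  proof -
    have "(1 - t) *\<^sub>R x + t *\<^sub>R y \<in> Delta"
      by (rule convexD[OF conv_Delta x y]) (use that in auto)
    moreover have "(1 - t) *\<^sub>R x + t *\<^sub>R y = x + t *\<^sub>R d" unfolding d_def by (simp add: algebra_simps)
    ultimately show ?thesis by simp
  qed
  have der: "(\<phi> has_real_derivative blinfun_apply (Du (x + t *\<^sub>R d)) d) (at t)" if "0 \<le> t" "t \<le> 1" for t
  proof -
    have l: "((\<lambda>t. x + t *\<^sub>R d) has_derivative (\<lambda>s. s *\<^sub>R d)) (at t)"
      by (auto intro!: derivative_eq_intros)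
    have "(\<phi> has_derivative (\<lambda>s. blinfun_apply (Du (x + t *\<^sub>R d)) (s *\<^sub>R d))) (at t)"
      unfolding \<phi>_def[abs_def] by (rule has_derivative_compose[OF l u0_Du[OF seg[OF that]]])
    then show ?thesis unfolding has_field_derivative_def
      by (rule has_derivative_eq_rhs) (auto simp: blinfun.scaleR_right)
  qed
  have "continuous_on {0..1} \<phi>"
    using der by (meson DERIV_isCont atLeastAtMost_iff continuous_at_imp_continuous_on)
  moreover have "\<phi> differentiable (at t)" if "0 < t" "t < 1" for t
    using der[of t] that real_differentiable_def by fastforce
  ultimately obtain l t where t: "0 < t" "t < 1" "DERIV \<phi> t :> l" "\<phi> 1 - \<phi> 0 = (1 - 0) * l"
    using MVT[of 0 1 \<phi>] by auto
  define z where "z = x + t *\<^sub>R d"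
  have z: "z \<in> Delta" unfolding z_def using seg t by auto
  have l: "l = blinfun_apply (Du z) d" using DERIV_unique[OF t(3) der[of t]] t unfolding z_def by auto
  have u: "u0 y - u0 x = (fst d + \<omega> (aa z) * snd d) / Rf (aa z)"
    using t(4) l unfolding \<phi>_def Du_ap d_def by simp
  have dd: "dist x y = sqrt ((fst d)^2 + (snd d)^2)" unfolding dist_pair d_def by simp
  have ab: "\<bar>u0 x - u0 y\<bar> = \<bar>(fst d + \<omega> (aa z) * snd d) / Rf (aa z)\<bar>" using u by linarith
  show ?thesis
  proof (intro conjI impI)
    show "\<bar>u0 x - u0 y\<bar> \<le> dist x y" unfolding ab dd by (rule cs_ineq(1)[OF Rf_pos Rf_sq])
    assume "\<bar>u0 x - u0 y\<bar> = dist x y"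
    then have e: "snd d = \<omega> (aa z) * fst d"
      unfolding ab dd by (rule cs_ineq(2)[OF Rf_pos Rf_sq])
    note az = aa[OF z]
    have Wp: "\<omega> (aa z) > 0" using pos_w az by auto
    have online: "p \<in> l_seg \<omega> (aa z)" if p: "p \<in> Delta" "p = z + s *\<^sub>R d" for p s
    proof -
      have "snd p = \<omega> (aa z) * (fst p + aa z)"
        using p(2) az e by (simp add: algebra_simps)
      moreover have "snd p > 0" "fst p < 1" using p(1) unfolding Delta_eq by auto
      ultimately have "fst p + aa z > 0" using Wp by (metis zero_less_mult_pos)
      then show ?thesis unfolding l_seg_iff using \<open>snd p = _\<close> \<open>fst p < 1\<close> by auto
    qed
    have "x \<in> l_seg \<omega> (aa z)" by (rule online[OF x, of "-t"]) (simp add: z_def)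
    moreover have "y \<in> l_seg \<omega> (aa z)" by (rule online[OF y, of "1-t"]) (simp add: z_def d_def algebra_simps)
    ultimately show "\<exists>a\<in>{0<..<1}. x \<in> l_seg \<omega> a \<and> y \<in> l_seg \<omega> a" using az by auto
  qed
qed

lemma lip_eq:
  assumes x: "x \<in> Delta" and y: "y \<in> Delta" and a: "0 < a" "a < 1"
    and xa: "x \<in> l_seg \<omega> a" and ya: "y \<in> l_seg \<omega> a"
  shows "\<bar>u0 x - u0 y\<bar> = dist x y"
proof -
  have ax: "aa x = a" using xa a aa_eq[of a "fst x"] unfolding l_seg_iff by (cases x) auto
  have ay: "aa y = a" using ya a aa_eq[of a "fst y"] unfolding l_seg_iff by (cases y) auto
  have "u0 x - u0 y = (fst x - fst y) * Rf a" unfolding u0_def ax ay by (simp add: algebra_simps)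
  moreover have "dist x y = sqrt ((fst x - fst y)^2 * (1 + (\<omega> a)^2))"
    unfolding dist_pair using xa ya unfolding l_seg_iff by (simp add: algebra_simps power2_eq_square)
  moreover have "sqrt ((fst x - fst y)^2 * (1 + (\<omega> a)^2)) = \<bar>fst x - fst y\<bar> * Rf a"
    unfolding Rf_def by (simp add: real_sqrt_mult)
  ultimately show ?thesis using Rf_pos[of a] by (simp add: abs_mult)
qed

end

lemma mcshane:
  fixes u0 :: "'a::metric_space \<Rightarrow> real"
  assumes ne: "D \<noteq> {}" and L: "\<And>x y. x\<in>D \<Longrightarrow> y\<in>D \<Longrightarrow> \<bar>u0 x - u0 y\<bar> \<le> dist x y"
  shows "1-lipschitz_on UNIV (\<lambda>x. Inf ((\<lambda>y. u0 y + dist x y) ` D))"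
    and "\<And>x. x\<in>D \<Longrightarrow> Inf ((\<lambda>y. u0 y + dist x y) ` D) = u0 x"
proof -
  define U where "U x = Inf ((\<lambda>y. u0 y + dist x y) ` D)" for x
  obtain y0 where y0: "y0 \<in> D" using ne by auto
  have bdd: "bdd_below ((\<lambda>y. u0 y + dist x y) ` D)" for x
  proof (rule bdd_belowI2)
    fix y assume y: "y \<in> D"
    have "dist y0 y \<le> dist x y0 + dist x y" by (metis dist_commute dist_triangle)
    then show "u0 y0 - dist x y0 \<le> u0 y + dist x y" using L[OF y0 y] by linarith
  qed
  have le: "U x \<le> u0 y + dist x y" if "y \<in> D" for x y
    unfolding U_def by (rule cInf_lower[OF imageI[OF that] bdd])
  have ge: "c \<le> U x" if "\<And>y. y\<in>D \<Longrightarrow> c \<le> u0 y + dist x y" for c x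
    unfolding U_def using ne that by (intro cInf_greatest) auto
  show "\<And>x. x\<in>D \<Longrightarrow> Inf ((\<lambda>y. u0 y + dist x y) ` D) = u0 x"
  proof -
    fix x assume x: "x \<in> D"
    have "U x \<le> u0 x" using le[OF x, of x] by simp
    moreover have "u0 x \<le> U x" by (rule ge) (use L[OF x] in force)
    ultimately show "Inf ((\<lambda>y. u0 y + dist x y) ` D) = u0 x" unfolding U_def by simp
  qed
  have one: "U x \<le> U x' + dist x x'" for x x'
  proof -
    have "U x - dist x x' \<le> U x'"
    proof (rule ge)
      fix y assume y: "y \<in> D"
      have "dist x y \<le> dist x x' + dist x' y" by (rule dist_triangle)
      then show "U x - dist x x' \<le> u0 y + dist x' y" using le[OF y, of x] by linarith
    qed
    then show ?thesis by simp
  qed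
  show "1-lipschitz_on UNIV (\<lambda>x. Inf ((\<lambda>y. u0 y + dist x y) ` D))"
  proof (rule lipschitz_onI)
    fix x x' :: 'a
    have "U x \<le> U x' + dist x x'" "U x' \<le> U x + dist x x'" using one[of x x'] one[of x' x]
      by (auto simp: dist_commute)
    then show "dist (Inf ((\<lambda>y. u0 y + dist x y) ` D)) (Inf ((\<lambda>y. u0 y + dist x' y) ` D)) \<le> 1 * dist x x'"
      unfolding U_def[symmetric] dist_real_def by linarith
  qed simp
qed

lemma Delta_ne: "Delta \<noteq> {}"
proof -
  have "(1/2, 1/4) \<in> Delta" unfolding Delta_eq by simp
  then show ?thesis by auto
qed

theorem lemma3p2:
  fixes \<omega> :: "real \<Rightarrow> real"
  assumes "\<omega> ` {0..1} \<subseteq> {0..1/2}"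
    and "continuous_on {0..1} \<omega>"
    and "C_infinity_on {0<..<1} \<omega>"
    and "\<forall>t\<in>{0<..<1}. deriv \<omega> t > 0"
    and "\<omega> 0 = 0" and "\<omega> 1 = 1/2"
  shows "\<exists>u :: real \<times> real \<Rightarrow> real.
           continuous_on (closure Delta) u \<and> (\<exists>L. L\<ge>0 \<and> L-lipschitz_on (closure Delta) u) \<and>
           C2_on Delta u \<and>
           (\<forall>x\<in>Delta. \<forall>y\<in>Delta. \<bar>u x - u y\<bar> \<le> dist x y \<and>
              (\<bar>u x - u y\<bar> = dist x y \<longleftrightarrow> (\<exists>a\<in>{0<..<1}. x \<in> l_seg \<omega> a \<and> y \<in> l_seg \<omega> a)))"
proof -
  interpret om \<omega> using assms by unfold_locales auto
  define U where "U x = Inf ((\<lambda>y. u0 y + dist x y) ` Delta)" for x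
  have L: "\<And>x y. x\<in>Delta \<Longrightarrow> y\<in>Delta \<Longrightarrow> \<bar>u0 x - u0 y\<bar> \<le> dist x y" using lip by blast
  have Ul: "1-lipschitz_on UNIV U" unfolding U_def[abs_def] by (rule mcshane(1)[OF Delta_ne L])
  have Ueq: "\<And>x. x\<in>Delta \<Longrightarrow> U x = u0 x" unfolding U_def by (rule mcshane(2)[OF Delta_ne L])
  have Ul2: "1-lipschitz_on (closure Delta) U" by (rule lipschitz_on_subset[OF Ul]) simp
  have C2: "C2_on Delta U"
  proof -
    obtain Du D2u where h: "\<forall>x\<in>Delta. (u0 has_derivative blinfun_apply (Du x)) (at x)"
      "continuous_on Delta Du" "\<forall>x\<in>Delta. (Du has_derivative blinfun_apply (D2u x)) (at x)"
      "continuous_on Delta D2u" using C2_u0 unfolding C2_on_def by blast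
    have "\<forall>x\<in>Delta. (U has_derivative blinfun_apply (Du x)) (at x)"
    proof
      fix x assume x: "x \<in> Delta"
      show "(U has_derivative blinfun_apply (Du x)) (at x)"
        by (rule has_derivative_transform_within_open[OF h(1)[rule_format, OF x] _ x])
           (auto simp: Delta_def Ueq)
    qed
    then show ?thesis unfolding C2_on_def using h by blast
  qed
  show ?thesis
  proof (intro exI[of _ U] conjI)
    show "continuous_on (closure Delta) U" by (rule lipschitz_on_continuous_on[OF Ul2])
    show "\<exists>L\<ge>0. L-lipschitz_on (closure Delta) U" using Ul2 by (intro exI[of _ 1]) auto
    show "C2_on Delta U" by (rule C2)
    show "\<forall>x\<in>Delta. \<forall>y\<in>Delta. \<bar>U x - U y\<bar> \<le> dist x y \<and>
              (\<bar>U x - U y\<bar> = dist x y \<longleftrightarrow> (\<exists>a\<in>{0<..<1}. x \<in> l_seg \<omega> a \<and> y \<in> l_seg \<omega> a))"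
      using lip lip_eq by (auto simp: Ueq)
  qed
qed


end
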